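(* Fix an integer $\ell>6$ and a real $t>0$. For integers $k>2$ let $T=\lfloor tk\rfloor$ and let $H_{\ell,k,t}$ be the graph constructed as follows: for each $1\le r\le k$ take disjoint paths $x_{0,r}x_{1,r}\cdots x_{\ell+1,r}$ and $y_{0,r}y_{1,r}y_{2,r}y_{3,r}y_{4,r}y_{5,r}$; identify all $x_{0,r},y_{0,r}$ into a single vertex $u$; identify all $x_{\ell+1,r},y_{5,r}$ into a single vertex $v$; identify $y_{2,1},\dots,y_{2,k}$ into a single vertex $y_{2,*}$ and $y_{3,1},\dots,y_{3,k}$ into a single vertex $y_{3,*}$ (the $k$ edges $y_{2,r}y_{3,r}$ becoming a single edge); finally add $T$ pendant vertices $u_1,\dots,u_T$ adjacent to $u$ and $T$ pendant vertices $v_1,\dots,v_T$ adjacent to $v$. Then for all sufficiently large $k$, the spectral path from $v_1$ to $u_1$ (with special vertex $u_1$) has length $\ell+3$, while the distance between $v_1$ and $u_1$ is $7$.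
   Context: For a finite connected graph $G$ with Laplacian $L=D-A$ and special vertex $s$ such that $G-s$ is connected, let $L_s$ be $L$ with row and column $s$ deleted, and let $f_s$ be an eigenvector of $L_s$ for its smallest eigenvalue, chosen positive on $V\setminus\{s\}$ (possible by a result of Steinerberger), extended by $f_s(s)=0$. Every vertex $x\ne s$ has a neighbor with strictly smaller $f_s$-value. The spectral tree $T_s$ is formed by joining each vertex $x\neq s$ to a neighbor minimizing $f_s$ (ties broken arbitrarily); the spectral path from $x$ to $s$ is the unique path from $x$ to $s$ in $T_s$. Length of a path is its number of edges. *)

theory Defs
  imports Complex_Main
begin

text \<open>A finite graph is given by a vertex set Vs and a symmetric irreflexive
adjacency predicate E (only its restriction to Vs matters).\<close>

definition nbrs :: "'a set \<Rightarrow> ('a \<Rightarrow> 'a \<Rightarrow> bool) \<Rightarrow> 'a \<Rightarrow> 'a set" where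
  "nbrs Vs E x = {y \<in> Vs. E x y}"

definition gdeg :: "'a set \<Rightarrow> ('a \<Rightarrow> 'a \<Rightarrow> bool) \<Rightarrow> 'a \<Rightarrow> nat" where
  "gdeg Vs E x = card (nbrs Vs E x)"

text \<open>Eigen-equation for the grounded Laplacian L_s (L = D - A with row and
column s deleted), for a vector g indexed by Vs - {s}:
(L_s g)(x) = deg(x) g(x) - sum over neighbours y /= s of g(y).\<close>

definition Ls_eig :: "'a set \<Rightarrow> ('a \<Rightarrow> 'a \<Rightarrow> bool) \<Rightarrow> 'a \<Rightarrow> ('a \<Rightarrow> real) \<Rightarrow> real \<Rightarrow> bool" where
  "Ls_eig Vs E s g \<mu> \<longleftrightarrow>
     (\<forall>x \<in> Vs - {s}. real (gdeg Vs E x) * g x - (\<Sum>y \<in> nbrs Vs E x - {s}. g y) = \<mu> * g x)"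

definition Ls_eigenvalue :: "'a set \<Rightarrow> ('a \<Rightarrow> 'a \<Rightarrow> bool) \<Rightarrow> 'a \<Rightarrow> real \<Rightarrow> bool" where
  "Ls_eigenvalue Vs E s \<mu> \<longleftrightarrow> (\<exists>g. (\<exists>x \<in> Vs - {s}. g x \<noteq> 0) \<and> Ls_eig Vs E s g \<mu>)"

definition spectral_vector :: "'a set \<Rightarrow> ('a \<Rightarrow> 'a \<Rightarrow> bool) \<Rightarrow> 'a \<Rightarrow> ('a \<Rightarrow> real) \<Rightarrow> bool" where
  "spectral_vector Vs E s f \<longleftrightarrow>
     (\<exists>lam. Ls_eigenvalue Vs E s lam \<and> (\<forall>\<mu>. Ls_eigenvalue Vs E s \<mu> \<longrightarrow> lam \<le> \<mu>) \<and>
          Ls_eig Vs E s f lam) \<and>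
     (\<forall>x \<in> Vs - {s}. f x > 0) \<and> f s = 0"

text \<open>A spectral tree T_s is encoded by its parent map p: every x /= s is joined
to a neighbour p x minimising f (ties broken arbitrarily).\<close>

definition spectral_tree :: "'a set \<Rightarrow> ('a \<Rightarrow> 'a \<Rightarrow> bool) \<Rightarrow> 'a \<Rightarrow> ('a \<Rightarrow> real) \<Rightarrow> ('a \<Rightarrow> 'a) \<Rightarrow> bool" where
  "spectral_tree Vs E s f p \<longleftrightarrow>
     (\<forall>x \<in> Vs - {s}. p x \<in> nbrs Vs E x \<and> (\<forall>y \<in> nbrs Vs E x. f (p x) \<le> f y))"

definition spectral_path_length :: "'a \<Rightarrow> ('a \<Rightarrow> 'a) \<Rightarrow> 'a \<Rightarrow> nat" where
  "spectral_path_length s p x = (LEAST n. (p ^^ n) x = s)"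

definition is_walk :: "'a set \<Rightarrow> ('a \<Rightarrow> 'a \<Rightarrow> bool) \<Rightarrow> 'a list \<Rightarrow> bool" where
  "is_walk Vs E ws \<longleftrightarrow> ws \<noteq> [] \<and> set ws \<subseteq> Vs \<and>
     (\<forall>i < length ws - 1. E (ws ! i) (ws ! Suc i))"

definition gdist :: "'a set \<Rightarrow> ('a \<Rightarrow> 'a \<Rightarrow> bool) \<Rightarrow> 'a \<Rightarrow> 'a \<Rightarrow> nat" where
  "gdist Vs E a b = (LEAST n. \<exists>ws. is_walk Vs E ws \<and> hd ws = a \<and> last ws = b \<and> length ws = n + 1)"

text \<open>Vertices: HU = u, HV = v, HX i r = x_{i,r} (1 <= i <= l), HY1 r = y_{1,r},
HY2 = y_{2,*}, HY3 = y_{3,*}, HY4 r = y_{4,r}, PU j = u_j, PV j = v_j.\<close>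

datatype hvert = HU | HV | HX nat nat | HY1 nat | HY2 | HY3 | HY4 nat | PU nat | PV nat

definition H_verts :: "nat \<Rightarrow> nat \<Rightarrow> nat \<Rightarrow> hvert set" where
  "H_verts l k T = {HU, HV, HY2, HY3} \<union> {HX i r | i r. i \<in> {1..l} \<and> r \<in> {1..k}}
     \<union> HY1 ` {1..k} \<union> HY4 ` {1..k} \<union> PU ` {1..T} \<union> PV ` {1..T}"

definition H_edge0 :: "nat \<Rightarrow> nat \<Rightarrow> nat \<Rightarrow> hvert \<Rightarrow> hvert \<Rightarrow> bool" where
  "H_edge0 l k T a b \<longleftrightarrow>
     (\<exists>r \<in> {1..k}.
         (a = HU \<and> b = HX 1 r)
       \<or> (\<exists>i \<in> {1..<l}. a = HX i r \<and> b = HX (Suc i) r)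
       \<or> (a = HX l r \<and> b = HV)
       \<or> (a = HU \<and> b = HY1 r)
       \<or> (a = HY1 r \<and> b = HY2)
       \<or> (a = HY3 \<and> b = HY4 r)
       \<or> (a = HY4 r \<and> b = HV))
   \<or> (a = HY2 \<and> b = HY3)
   \<or> (\<exists>j \<in> {1..T}. (a = HU \<and> b = PU j) \<or> (a = HV \<and> b = PV j))"

definition H_adj :: "nat \<Rightarrow> nat \<Rightarrow> nat \<Rightarrow> hvert \<Rightarrow> hvert \<Rightarrow> bool" where
  "H_adj l k T a b \<longleftrightarrow> H_edge0 l k T a b \<or> H_edge0 l k T b a"

end

theory Submission
  imports Defs
begin

lemma eig_at:
  assumes "finite Vs" "Ls_eig Vs E s g \<mu>" "g s = 0" "x \<in> Vs - {s}"
  shows "(\<Sum>y\<in>nbrs Vs E x. (g x - g y)) = \<mu> * g x"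
proof -
  have fin: "finite (nbrs Vs E x)" using assms(1) unfolding nbrs_def by simp
  have "(\<Sum>y\<in>nbrs Vs E x - {s}. g y) = (\<Sum>y\<in>nbrs Vs E x. g y)"
    using fin assms(3) by (simp add: sum_diff1)
  moreover have "(\<Sum>y\<in>nbrs Vs E x. (g x - g y)) = real (gdeg Vs E x) * g x - (\<Sum>y\<in>nbrs Vs E x. g y)"
    by (simp add: sum_subtractf gdeg_def)
  moreover have "real (gdeg Vs E x) * g x - (\<Sum>y\<in>nbrs Vs E x - {s}. g y) = \<mu> * g x"
    using assms(2,4) unfolding Ls_eig_def by blast
  ultimately show ?thesis by linarith
qed

lemma antisym_sum:
  assumes "finite A" "\<And>x y. E x y = E y x"
  shows "(\<Sum>x\<in>A. \<Sum>y\<in>A. (if E x y then (g x - g y) else 0)) = (0::real)"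
proof -
  have "(\<Sum>x\<in>A. \<Sum>y\<in>A. (if E x y then (g x - g y) else 0)) =
        (\<Sum>x\<in>A. \<Sum>y\<in>A. ((if E x y then g x else 0) - (if E x y then g y else 0)))"
    by (intro sum.cong refl) simp
  also have "\<dots> = (\<Sum>x\<in>A. \<Sum>y\<in>A. (if E x y then g x else 0)) - (\<Sum>x\<in>A. \<Sum>y\<in>A. (if E x y then g y else 0))"
    by (simp only: sum_subtractf)
  also have "(\<Sum>x\<in>A. \<Sum>y\<in>A. (if E x y then g y else 0)) = (\<Sum>x\<in>A. \<Sum>y\<in>A. (if E x y then g x else 0))"
  proof -
  have "(\<Sum>x\<in>A. \<Sum>y\<in>A. (if E x y then g y else 0)) = (\<Sum>y\<in>A. \<Sum>x\<in>A. (if E x y then g y else 0))"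
    by (rule sum.swap)
  also have "\<dots> = (\<Sum>x\<in>A. \<Sum>y\<in>A. (if E x y then g x else 0))"
    by (intro sum.cong refl) (simp only: assms(2))
  finally show ?thesis .
  qed
  finally show ?thesis by simp
qed

lemma global_id:
  assumes "finite Vs" "s \<in> Vs" "\<And>x y. E x y = E y x" "Ls_eig Vs E s g \<mu>" "g s = 0"
  shows "\<mu> * (\<Sum>x\<in>Vs-{s}. g x) = (\<Sum>x\<in>{x\<in>Vs-{s}. E x s}. g x)"
proof -
  let ?A = "Vs - {s}"
  have finA: "finite ?A" using assms(1) by simp
  have VA: "Vs = insert s ?A" using assms(2) by auto
  have "\<mu> * (\<Sum>x\<in>?A. g x) = (\<Sum>x\<in>?A. \<Sum>y\<in>nbrs Vs E x. (g x - g y))"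
    by (simp add: sum_distrib_left eig_at[OF assms(1,4,5)])
  also have "\<dots> = (\<Sum>x\<in>?A. \<Sum>y\<in>Vs. (if E x y then (g x - g y) else 0))"
    unfolding nbrs_def by (simp add: sum.inter_filter[OF assms(1)])
  also have "\<dots> = (\<Sum>x\<in>?A. (\<Sum>y\<in>?A. (if E x y then (g x - g y) else 0)) + (if E x s then g x else 0))"
  proof (rule sum.cong[OF refl])
    fix x assume "x \<in> ?A"
    show "(\<Sum>y\<in>Vs. (if E x y then (g x - g y) else 0)) = (\<Sum>y\<in>?A. (if E x y then (g x - g y) else 0)) + (if E x s then g x else 0)"
      using sum.remove[OF assms(1) assms(2), of "\<lambda>y. (if E x y then (g x - g y) else 0)"] assms(5) by simp
  qed
  also have "\<dots> = (\<Sum>x\<in>?A. \<Sum>y\<in>?A. (if E x y then (g x - g y) else 0)) + (\<Sum>x\<in>?A. (if E x s then g x else 0))"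
    by (simp add: sum.distrib)
  also have "\<dots> = (\<Sum>x\<in>?A. (if E x s then g x else 0))"
    using antisym_sum[OF finA assms(3)] by simp
  also have "\<dots> = (\<Sum>x\<in>{x\<in>?A. E x s}. g x)"
    by (rule sum.inter_filter[OF finA, symmetric])
  finally show ?thesis .
qed

lemma smaller_nbr:
  assumes "finite Vs" "Ls_eig Vs E s g \<mu>" "g s = 0" "x \<in> Vs - {s}" "\<mu> > 0" "g x > 0"
  shows "\<exists>y\<in>nbrs Vs E x. g y < g x"
proof (rule ccontr)
  assume "\<not> ?thesis"
  then have "(\<Sum>y\<in>nbrs Vs E x. (g x - g y)) \<le> 0" by (intro sum_nonpos) auto
  moreover have "\<mu> * g x > 0" using assms by simp
  ultimately show False using eig_at[OF assms(1-4)] by simp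
qed

lemma rec_grow:
  fixes \<delta> :: "nat \<Rightarrow> real"
  assumes d0: "\<delta> 0 = 0" and d1: "\<delta> 1 > 0"
    and rec: "\<And>i. 1 \<le> i \<Longrightarrow> i \<le> n \<Longrightarrow> \<delta> (Suc i) = (2 - lam) * \<delta> i - \<delta> (i-1)"
    and lam0: "0 \<le> lam" and small: "lam * (real n + 1)^2 \<le> 1"
  shows "\<delta> (n+1) > 0"
proof -
  have inv: "1 \<le> m \<longrightarrow> m \<le> n+1 \<longrightarrow>
     (\<delta> m - \<delta> (m-1) \<ge> \<delta> 1 * (1 - lam * (real m)^2) \<and> \<delta> m - \<delta> (m-1) \<le> \<delta> 1
      \<and> \<delta> 1 \<le> \<delta> m \<and> \<delta> m \<le> real m * \<delta> 1)" for m
  proof (induction m)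
    case 0 then show ?case by simp
  next
    case (Suc m)
    show ?case
    proof (cases "m = 0")
      case True then show ?thesis using d0 d1 lam0 by (simp add: mult_nonneg_nonneg)
    next
      case False
      show ?thesis
      proof (intro impI)
        assume h: "Suc m \<le> n + 1"
        then have m1: "1 \<le> m" "m \<le> n" using False by auto
        then have IH: "\<delta> m - \<delta> (m-1) \<ge> \<delta> 1 * (1 - lam * (real m)^2)" "\<delta> m - \<delta> (m-1) \<le> \<delta> 1"
           "\<delta> 1 \<le> \<delta> m" "\<delta> m \<le> real m * \<delta> 1" using Suc.IH by auto
        have r: "\<delta> (Suc m) - \<delta> m = (\<delta> m - \<delta> (m-1)) - lam * \<delta> m"
          using rec[OF m1] by (simp add: algebra_simps)
        have p1: "lam * \<delta> m \<le> lam * (real m * \<delta> 1)" using IH(4) lam0 by (rule mult_left_mono)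
        have p2: "lam * \<delta> m \<ge> 0" using IH(3) d1 lam0 by simp
        have p3: "\<delta> 1 * (1 - lam * (real m)^2) - lam * (real m * \<delta> 1) \<ge> \<delta> 1 * (1 - lam * (real (Suc m))^2)"
        proof -
          have "\<delta> 1 * (1 - lam * (real m)^2) - lam * (real m * \<delta> 1) - \<delta> 1 * (1 - lam * (real (Suc m))^2)
               = \<delta> 1 * lam * (real m + 1)" by (simp add: algebra_simps power2_eq_square)
          also have "\<dots> \<ge> 0" using d1 lam0 by simp
          finally show ?thesis by simp
        qed
        have "lam * (real (Suc m))^2 \<le> lam * (real n + 1)^2"
          using h lam0 by (intro mult_left_mono power_mono) auto
        then have p4: "\<delta> 1 * (1 - lam * (real (Suc m))^2) \<ge> 0" using small d1 by simp
        show "\<delta> (Suc m) - \<delta> (Suc m - 1) \<ge> \<delta> 1 * (1 - lam * (real (Suc m))^2) \<and>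
          \<delta> (Suc m) - \<delta> (Suc m - 1) \<le> \<delta> 1 \<and> \<delta> 1 \<le> \<delta> (Suc m) \<and> \<delta> (Suc m) \<le> real (Suc m) * \<delta> 1"
          using r p1 p2 p3 p4 IH by (simp add: algebra_simps)
      qed
    qed
  qed
  have "\<delta> 1 \<le> \<delta> (n+1)" using inv[of "n+1"] by simp
  then show ?thesis using d1 by simp
qed

lemma rec_zero:
  fixes \<delta> :: "nat \<Rightarrow> real"
  assumes d0: "\<delta> 0 = 0" and dn: "\<delta> (n+1) = 0"
    and rec: "\<And>i. 1 \<le> i \<Longrightarrow> i \<le> n \<Longrightarrow> \<delta> (Suc i) = (2 - lam) * \<delta> i - \<delta> (i-1)"
    and lam0: "0 \<le> lam" and small: "lam * (real n + 1)^2 \<le> 1"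
  shows "\<forall>i \<le> n+1. \<delta> i = 0"
proof -
  have "\<delta> 1 = 0"
  proof (rule ccontr)
    assume ne: "\<delta> 1 \<noteq> 0"
    show False
    proof (cases "\<delta> 1 > 0")
      case True
      then show False using rec_grow[of \<delta> n lam] d0 rec lam0 small dn by simp
    next
      case False
      then have "(\<lambda>i. - \<delta> i) 1 > 0" using ne by simp
      moreover have "\<And>i. 1 \<le> i \<Longrightarrow> i \<le> n \<Longrightarrow> - \<delta> (Suc i) = (2 - lam) * (- \<delta> i) - (- \<delta> (i-1))"
        using rec by simp
      ultimately have "- \<delta> (n+1) > 0" using rec_grow[of "\<lambda>i. - \<delta> i" n lam] d0 lam0 small by simp
      then show False using dn by simp
    qed
  qed
  have "i \<le> n \<longrightarrow> \<delta> i = 0 \<and> \<delta> (Suc i) = 0" for i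
  proof (induction i)
    case 0 then show ?case using d0 \<open>\<delta> 1 = 0\<close> by simp
  next
    case (Suc i)
    show ?case
    proof
      assume "Suc i \<le> n"
      then have "\<delta> i = 0" "\<delta> (Suc i) = 0" using Suc.IH by auto
      moreover have "\<delta> (Suc (Suc i)) = (2 - lam) * \<delta> (Suc i) - \<delta> i"
        using rec[of "Suc i"] \<open>Suc i \<le> n\<close> by simp
      ultimately show "\<delta> (Suc i) = 0 \<and> \<delta> (Suc (Suc i)) = 0" by simp
    qed
  qed
  then show ?thesis using dn by (metis Suc_eq_plus1 le_Suc_eq)
qed

locale HG =
  fixes l k T :: nat
  assumes l2: "l \<ge> 2" and k1: "k \<ge> 1" and T1: "T \<ge> 1"
begin

abbreviation "V \<equiv> H_verts l k T"
abbreviation "E \<equiv> H_adj l k T"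

lemma finite_V: "finite V"
proof -
  have "{HX i r | i r. i \<in> {1..l} \<and> r \<in> {1..k}} = (\<lambda>(i,r). HX i r) ` ({1..l} \<times> {1..k})" by auto
  then show ?thesis unfolding H_verts_def by simp
qed

lemma nbrs_HU: "nbrs V E HU = HX 1 ` {1..k} \<union> HY1 ` {1..k} \<union> PU ` {1..T}"
  unfolding nbrs_def H_verts_def H_adj_def H_edge0_def using l2 by auto

lemma nbrs_HV: "nbrs V E HV = HX l ` {1..k} \<union> HY4 ` {1..k} \<union> PV ` {1..T}"
  unfolding nbrs_def H_verts_def H_adj_def H_edge0_def using l2 by auto

lemma nbrs_HY1: "r \<in> {1..k} \<Longrightarrow> nbrs V E (HY1 r) = {HU, HY2}"
  unfolding nbrs_def H_verts_def H_adj_def H_edge0_def using l2 by auto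

lemma nbrs_HY4: "r \<in> {1..k} \<Longrightarrow> nbrs V E (HY4 r) = {HY3, HV}"
  unfolding nbrs_def H_verts_def H_adj_def H_edge0_def using l2 by auto

lemma nbrs_HY2: "nbrs V E HY2 = HY1 ` {1..k} \<union> {HY3}"
  unfolding nbrs_def H_verts_def H_adj_def H_edge0_def using l2 by auto

lemma nbrs_HY3: "nbrs V E HY3 = HY4 ` {1..k} \<union> {HY2}"
  unfolding nbrs_def H_verts_def H_adj_def H_edge0_def using l2 by auto

lemma nbrs_PU: "j \<in> {1..T} \<Longrightarrow> nbrs V E (PU j) = {HU}"
  unfolding nbrs_def H_verts_def H_adj_def H_edge0_def using l2 k1 by auto

lemma nbrs_PV: "j \<in> {1..T} \<Longrightarrow> nbrs V E (PV j) = {HV}"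
  unfolding nbrs_def H_verts_def H_adj_def H_edge0_def using l2 k1 by auto

lemma nbrs_HX: "i \<in> {1..l} \<Longrightarrow> r \<in> {1..k} \<Longrightarrow> nbrs V E (HX i r) =
   {if i = 1 then HU else HX (i-1) r, if i = l then HV else HX (i+1) r}"
  unfolding nbrs_def H_verts_def H_adj_def H_edge0_def using l2 
  by (auto split: if_splits)


end

locale HF = HG +
  fixes f :: "hvert \<Rightarrow> real" and lam :: real
  assumes eig: "Ls_eig (H_verts l k T) (H_adj l k T) (PU 1) f lam"
    and pos: "\<forall>x\<in>H_verts l k T - {PU 1}. f x > 0" and fs: "f (PU 1) = 0"
begin

lemma mem_basic: "HU \<in> V" "HV \<in> V" "HY2 \<in> V" "HY3 \<in> V"
  unfolding H_verts_def by auto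
lemma mem_HX: "i \<in> {1..l} \<Longrightarrow> r \<in> {1..k} \<Longrightarrow> HX i r \<in> V"
  unfolding H_verts_def by auto
lemma mem_HY: "r \<in> {1..k} \<Longrightarrow> HY1 r \<in> V" "r \<in> {1..k} \<Longrightarrow> HY4 r \<in> V"
  unfolding H_verts_def by auto
lemma mem_P: "j \<in> {1..T} \<Longrightarrow> PU j \<in> V" "j \<in> {1..T} \<Longrightarrow> PV j \<in> V"
  unfolding H_verts_def by auto

lemma eq: "x \<in> V - {PU 1} \<Longrightarrow> (\<Sum>y\<in>nbrs V E x. (f x - f y)) = lam * f x"
  using eig_at[OF finite_V eig fs] by blast

lemma symE: "E x y = E y x" unfolding H_adj_def by auto

lemma adjPU1: "{x\<in>V-{PU 1}. E x (PU 1)} = {HU}"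
  unfolding H_verts_def H_adj_def H_edge0_def using T1 by auto

lemma glob: "lam * (\<Sum>x\<in>V-{PU 1}. f x) = f HU"
  using global_id[OF finite_V _ symE eig fs] mem_P(1)[of 1] T1 adjPU1 by simp

lemma fa: "f HU > 0" using pos mem_basic by auto

lemma sum_pos': "(\<Sum>x\<in>V-{PU 1}. f x) > 0"
proof -
  have "(\<Sum>x\<in>V-{PU 1}. f x) \<ge> f HU"
    using member_le_sum[of HU "V-{PU 1}" f] finite_V mem_basic pos by (auto intro: less_imp_le)
  then show ?thesis using fa by simp
qed

lemma lam_pos: "lam > 0"
proof (rule ccontr)
  assume "\<not> lam > 0"
  then have "lam * (\<Sum>x\<in>V-{PU 1}. f x) \<le> 0" using sum_pos' by (simp add: mult_nonpos_nonneg)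
  then show False using glob fa by simp
qed

lemma minHU: "x \<in> V-{PU 1} \<Longrightarrow> f HU \<le> f x"
proof -
  let ?A = "V - {PU 1}"
  have fin: "finite ?A" using finite_V by simp
  have ne: "?A \<noteq> {}" using mem_basic by auto
  obtain m where m: "m \<in> ?A" "\<forall>x\<in>?A. f m \<le> f x"
    using arg_min_if_finite(1)[OF fin ne, of f] arg_min_least[OF fin ne, of _ f] by blast
  have "m = HU"
  proof (rule ccontr)
    assume "m \<noteq> HU"
    then have "\<not> E m (PU 1)" using adjPU1 m(1) by blast
    obtain y where y: "y \<in> nbrs V E m" "f y < f m"
      using smaller_nbr[OF finite_V eig fs m(1) lam_pos] pos m(1) by blast
    have "y \<in> V" "E m y" using y(1) unfolding nbrs_def by auto
    then have "y \<in> ?A" using \<open>\<not> E m (PU 1)\<close> by auto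
    then show False using m(2) y(2) by force
  qed
  then show "x \<in> ?A \<Longrightarrow> f HU \<le> f x" using m by simp
qed


abbreviation "nV \<equiv> card (V - {PU 1})"

lemma lam_nV: "lam * real nV \<le> 1"
proof -
  have "real nV * f HU \<le> (\<Sum>x\<in>V-{PU 1}. f x)"
    using sum_bounded_below[of "V-{PU 1}" "f HU" f] minHU by simp
  then have "lam * (real nV * f HU) \<le> f HU" using glob lam_pos by (metis mult_left_mono less_imp_le)
  then show ?thesis using fa by (simp add: mult.assoc[symmetric])
qed

lemma nV_ge: "nV \<ge> k"
proof -
  have "HY1 ` {1..k} \<subseteq> V - {PU 1}" using mem_HY(1) by auto
  then have "card (HY1 ` {1..k}) \<le> nV" using finite_V by (intro card_mono) auto
  moreover have "card (HY1 ` {1..k}) = k" by (simp add: card_image inj_on_def)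
  ultimately show ?thesis by simp
qed

lemma lam_k: "lam * real k \<le> 1"
  using lam_nV nV_ge lam_pos by (smt (verit) mult_left_mono of_nat_mono)

lemma PV_eq: "j \<in> {1..T} \<Longrightarrow> f (PV j) - f HV = lam * f (PV j)"
  using eq[of "PV j"] mem_P(2)[of j] nbrs_PV[of j] by simp

lemma PU_eq: "j \<in> {1..T} \<Longrightarrow> j \<noteq> 1 \<Longrightarrow> f (PU j) - f HU = lam * f (PU j)"
  using eq[of "PU j"] mem_P(1)[of j] nbrs_PU[of j] by simp

lemma lam_lt1: "lam < 1"
proof -
  have "f (PV 1) > 0" "f HV > 0" using pos mem_P(2)[of 1] T1 mem_basic by auto
  moreover have "(1 - lam) * f (PV 1) = f HV" using PV_eq[of 1] T1 by (simp add: algebra_simps)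
  ultimately show ?thesis by (metis diff_gt_0_iff_gt zero_less_mult_pos2)
qed

definition X :: "nat \<Rightarrow> nat \<Rightarrow> real" where
  "X r i = (if i = 0 then f HU else if i = l+1 then f HV else f (HX i r))"

lemma X_rec: assumes r: "r \<in> {1..k}" and i: "1 \<le> i" "i \<le> l"
  shows "X r (Suc i) = (2 - lam) * X r i - X r (i-1)"
proof -
  let ?L = "if i = 1 then HU else HX (i-1) r" and ?R = "if i = l then HV else HX (i+1) r"
  have ne: "?L \<noteq> ?R" by auto
  have "(\<Sum>y\<in>{?L, ?R}. (f (HX i r) - f y)) = lam * f (HX i r)"
    using eq[of "HX i r"] mem_HX[of i r] nbrs_HX[of i r] r i by simp
  then have "(f (HX i r) - f ?L) + (f (HX i r) - f ?R) = lam * f (HX i r)"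
    using ne by simp
  moreover have "f ?L = X r (i-1)" "f ?R = X r (Suc i)" "f (HX i r) = X r i"
    unfolding X_def using i by auto
  ultimately show ?thesis by (simp add: algebra_simps)
qed

end

locale HF2 = HF +
  assumes ksym: "(real l + 1)^2 \<le> real k"
    and kbig: "6 * real nV * (real l + 1) \<le> (real k)^2"
begin

lemma X_sym: assumes r: "r \<in> {1..k}" and i: "i \<le> l+1" shows "X r i = X 1 i"
proof -
  have 1: "1 \<in> {1..k}" using k1 by simp
  have "lam * (real l + 1)^2 \<le> lam * real k" using ksym lam_pos by (intro mult_left_mono) auto
  then have sm: "lam * (real l + 1)^2 \<le> 1" using lam_k by linarith
  have "\<forall>i \<le> l+1. (\<lambda>i. X r i - X 1 i) i = 0"
  proof (rule rec_zero[where lam = lam])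
    show "X r 0 - X 1 0 = 0" "X r (l+1) - X 1 (l+1) = 0" unfolding X_def by auto
    show "0 \<le> lam" using lam_pos by simp
    show "lam * (real l + 1)^2 \<le> 1" by (rule sm)
    fix j assume "1 \<le> j" "j \<le> l"
    then show "X r (Suc j) - X 1 (Suc j) = (2 - lam) * (X r j - X 1 j) - (X r (j-1) - X 1 (j-1))"
      using X_rec[OF r, of j] X_rec[OF 1, of j] by (simp add: algebra_simps)
  qed
  then show ?thesis using i by simp
qed

abbreviation "xs \<equiv> X 1"
abbreviation "a \<equiv> f HU"
abbreviation "b \<equiv> f HV"
abbreviation "c \<equiv> f HY2"
abbreviation "d \<equiv> f HY3"
definition "y1 = (a + c) / (2 - lam)"
definition "y4 = (d + b) / (2 - lam)"

lemma fHX: "i \<in> {1..l} \<Longrightarrow> r \<in> {1..k} \<Longrightarrow> f (HX i r) = xs i"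
  using X_sym[of r i] unfolding X_def by (auto split: if_splits)

lemma xs0: "xs 0 = a" and xsl: "xs (l+1) = b" unfolding X_def by auto

lemma fHY1: "r \<in> {1..k} \<Longrightarrow> f (HY1 r) = y1"
proof -
  assume r: "r \<in> {1..k}"
  have "(\<Sum>y\<in>{HU, HY2}. (f (HY1 r) - f y)) = lam * f (HY1 r)"
    using eq[of "HY1 r"] mem_HY(1)[OF r] nbrs_HY1[OF r] by simp
  then have "(2 - lam) * f (HY1 r) = a + c" by (simp add: algebra_simps)
  moreover have "2 - lam \<noteq> 0" using lam_lt1 by simp
  ultimately show ?thesis unfolding y1_def by (simp add: field_simps)
qed

lemma fHY4: "r \<in> {1..k} \<Longrightarrow> f (HY4 r) = y4"
proof -
  assume r: "r \<in> {1..k}"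
  have "(\<Sum>y\<in>{HY3, HV}. (f (HY4 r) - f y)) = lam * f (HY4 r)"
    using eq[of "HY4 r"] mem_HY(2)[OF r] nbrs_HY4[OF r] by simp
  then have "(2 - lam) * f (HY4 r) = d + b" by (simp add: algebra_simps)
  moreover have "2 - lam \<noteq> 0" using lam_lt1 by simp
  ultimately show ?thesis unfolding y4_def by (simp add: field_simps)
qed

lemma HU_eq: "real k * (a - xs 1) + real k * (a - y1) + (\<Sum>j\<in>{1..T}. (a - f (PU j))) = lam * a"
proof -
  have "(\<Sum>y\<in>nbrs V E HU. (a - f y)) = lam * a" using eq[of HU] mem_basic by simp
  moreover have "(\<Sum>y\<in>nbrs V E HU. (a - f y)) = (\<Sum>r\<in>{1..k}. (a - f (HX 1 r))) + (\<Sum>r\<in>{1..k}. (a - f (HY1 r))) + (\<Sum>j\<in>{1..T}. (a - f (PU j)))"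
    unfolding nbrs_HU by (subst sum.union_disjoint, auto, subst sum.union_disjoint, auto simp: sum.reindex inj_on_def)
  moreover have "(\<Sum>r\<in>{1..k}. (a - f (HX 1 r))) = real k * (a - xs 1)" using fHX[of 1] l2 by simp
  moreover have "(\<Sum>r\<in>{1..k}. (a - f (HY1 r))) = real k * (a - y1)" using fHY1 by simp
  ultimately show ?thesis by simp
qed


lemma HV_eq: "real k * (b - xs l) + real k * (b - y4) + (\<Sum>j\<in>{1..T}. (b - f (PV j))) = lam * b"
proof -
  have "(\<Sum>y\<in>nbrs V E HV. (b - f y)) = lam * b" using eq[of HV] mem_basic by simp
  moreover have "(\<Sum>y\<in>nbrs V E HV. (b - f y)) = (\<Sum>r\<in>{1..k}. (b - f (HX l r))) + (\<Sum>r\<in>{1..k}. (b - f (HY4 r))) + (\<Sum>j\<in>{1..T}. (b - f (PV j)))"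
    unfolding nbrs_HV by (subst sum.union_disjoint, auto, subst sum.union_disjoint, auto simp: sum.reindex inj_on_def)
  moreover have "(\<Sum>r\<in>{1..k}. (b - f (HX l r))) = real k * (b - xs l)" using fHX[of l] l2 by simp
  moreover have "(\<Sum>r\<in>{1..k}. (b - f (HY4 r))) = real k * (b - y4)" using fHY4 by simp
  ultimately show ?thesis by simp
qed

lemma HY2_eq: "real k * (c - y1) + (c - d) = lam * c"
proof -
  have "(\<Sum>y\<in>nbrs V E HY2. (c - f y)) = lam * c" using eq[of HY2] mem_basic by simp
  moreover have "(\<Sum>y\<in>nbrs V E HY2. (c - f y)) = (\<Sum>r\<in>{1..k}. (c - f (HY1 r))) + (c - d)"
    unfolding nbrs_HY2 by (subst sum.union_disjoint, auto simp: sum.reindex inj_on_def)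
  moreover have "(\<Sum>r\<in>{1..k}. (c - f (HY1 r))) = real k * (c - y1)" using fHY1 by simp
  ultimately show ?thesis by simp
qed

lemma HY3_eq: "real k * (d - y4) + (d - c) = lam * d"
proof -
  have "(\<Sum>y\<in>nbrs V E HY3. (d - f y)) = lam * d" using eq[of HY3] mem_basic by simp
  moreover have "(\<Sum>y\<in>nbrs V E HY3. (d - f y)) = (\<Sum>r\<in>{1..k}. (d - f (HY4 r))) + (d - c)"
    unfolding nbrs_HY3 by (subst sum.union_disjoint, auto simp: sum.reindex inj_on_def)
  moreover have "(\<Sum>r\<in>{1..k}. (d - f (HY4 r))) = real k * (d - y4)" using fHY4 by simp
  ultimately show ?thesis by simp
qed

lemma k1r: "real k \<ge> 1" using k1 by simp
lemma lk: "real l + 1 \<le> real k"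
proof -
  have "real l + 1 \<le> (real l + 1)^2" by (simp add: power2_eq_square)
  then show ?thesis using ksym by simp
qed
lemma k9: "real k \<ge> 3" using lk l2 by simp
lemma lam_half: "lam \<le> 1/2"
proof -
  have "lam * 3 \<le> lam * real k" using k9 lam_pos by (intro mult_left_mono) auto
  then show ?thesis using lam_k by simp
qed

lemma a_le_y1: "a \<le> y1" using minHU[of "HY1 1"] mem_HY(1)[of 1] fHY1[of 1] k1 by auto
lemma a_le_y4: "a \<le> y4" using minHU[of "HY4 1"] mem_HY(2)[of 1] fHY4[of 1] k1 by auto
lemma a_le_c: "a \<le> c" and a_le_d: "a \<le> d" and a_le_b: "a \<le> b"
  using minHU mem_basic by auto
lemma a_le_xs: "1 \<le> i \<Longrightarrow> i \<le> l \<Longrightarrow> a \<le> xs i"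
  using minHU[of "HX i 1"] mem_HX[of i 1] fHX[of i 1] k1 by auto
lemma xs_pos: "i \<le> l+1 \<Longrightarrow> xs i > 0"
proof -
  assume "i \<le> l+1"
  then consider "i = 0" | "1 \<le> i \<and> i \<le> l" | "i = l+1" by linarith
  then show ?thesis using a_le_xs fa a_le_b xs0 xsl by (cases; fastforce)
qed

lemma PUsum: "(\<Sum>j\<in>{1..T}. (a - f (PU j))) \<le> a"
proof -
  have "(\<Sum>j\<in>{1..T}. (a - f (PU j))) \<le> (\<Sum>j\<in>{1..T}. (if j = 1 then a else 0))"
  proof (rule sum_mono)
    fix j assume j: "j \<in> {1..T}"
    show "a - f (PU j) \<le> (if j = 1 then a else 0)"
      using fs minHU[of "PU j"] mem_P(1)[OF j] by auto
  qed
  also have "\<dots> = a" using T1 by simp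
  finally show ?thesis .
qed

lemma phi0_bd: "real k * (xs 1 - a) \<le> a" and y1_bd: "real k * (y1 - a) \<le> a"
proof -
  have "real k * (xs 1 - a) + real k * (y1 - a) \<le> a"
    using HU_eq PUsum lam_pos fa by (simp add: algebra_simps) (smt (verit) mult_pos_pos)
  moreover have "real k * (xs 1 - a) \<ge> 0" "real k * (y1 - a) \<ge> 0"
    using a_le_xs[of 1] a_le_y1 l2 by auto
  ultimately show "real k * (xs 1 - a) \<le> a" "real k * (y1 - a) \<le> a" by linarith+
qed

lemma xs_step: "1 \<le> i \<Longrightarrow> i \<le> l \<Longrightarrow> xs (Suc i) - xs i = (xs i - xs (i-1)) - lam * xs i"
  using X_rec[of 1 i] k1 by (simp add: algebra_simps)

lemma phi_le: "i \<le> l \<Longrightarrow> xs (Suc i) - xs i \<le> xs 1 - xs 0"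
proof (induction i)
  case 0 then show ?case by simp
next
  case (Suc i)
  have "lam * xs (Suc i) \<ge> 0" using xs_pos[of "Suc i"] Suc.prems lam_pos by simp
  then show ?case using xs_step[of "Suc i"] Suc by simp
qed

lemma xs_le: "m \<le> l+1 \<Longrightarrow> xs m - a \<le> real m * (xs 1 - a)"
proof (induction m)
  case 0 then show ?case using xs0 by simp
next
  case (Suc m)
  then show ?case using phi_le[of m] xs0 by (simp add: algebra_simps)
qed

lemma ba_bd: "real k * (b - a) \<le> (real l + 1) * a"
proof -
  have "b - a \<le> (real l + 1) * (xs 1 - a)" using xs_le[of "l+1"] xsl by (simp add: add.commute)
  then have "real k * (b - a) \<le> real k * ((real l + 1) * (xs 1 - a))" using k1 by (intro mult_left_mono) auto
  also have "\<dots> = (real l + 1) * (real k * (xs 1 - a))" by simp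
  also have "\<dots> \<le> (real l + 1) * a" using phi0_bd by (intro mult_left_mono) auto
  finally show ?thesis .
qed


lemma y1_eq: "(2 - lam) * y1 = a + c"
  using lam_lt1 unfolding y1_def by (simp add: field_simps)
lemma y4_eq: "(2 - lam) * y4 = d + b"
  using lam_lt1 unfolding y4_def by (simp add: field_simps)

lemma xs_2a: "i \<le> l+1 \<Longrightarrow> xs i \<le> 2 * a"
proof -
  assume i: "i \<le> l+1"
  have nn: "xs 1 - a \<ge> 0" using a_le_xs[of 1] l2 by simp
  have "real i * (xs 1 - a) \<le> real k * (xs 1 - a)"
    using i lk nn by (intro mult_right_mono) auto
  then show ?thesis using xs_le[OF i] phi0_bd by linarith
qed

lemma b_2a: "b \<le> 2 * a" using xs_2a[of "l+1"] xsl by simp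

lemma y1_2a: "y1 \<le> 2 * a"
proof -
  have "1 * (y1 - a) \<le> real k * (y1 - a)" using k1r a_le_y1
    by (intro mult_right_mono) auto
  then have "y1 - a \<le> real k * (y1 - a)" by simp
  then show ?thesis using y1_bd by linarith
qed

lemma c_3a: "c \<le> 3 * a"
proof -
  have "lam * y1 \<ge> 0" using lam_pos a_le_y1 fa by simp
  then show ?thesis using y1_eq y1_2a by (simp add: algebra_simps)
qed

lemma d_4a: "d \<le> 4 * a"
proof -
  have l1: "lam * y1 \<ge> 0" "lam * c \<ge> 0" using lam_pos a_le_y1 a_le_c fa by simp_all
  have "c - y1 \<le> y1 - a" using y1_eq l1 by (simp add: algebra_simps)
  then have "real k * (c - y1) \<le> real k * (y1 - a)" using k1 by (intro mult_left_mono) auto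
  then show ?thesis using HY2_eq y1_bd c_3a l1 by linarith
qed

lemma y4_6a: "y4 \<le> 6 * a"
proof -
  have "lam * y4 \<le> 1 * y4" using lam_lt1 a_le_y4 fa
    by (intro mult_right_mono) auto
  then show ?thesis using y4_eq d_4a b_2a by (simp add: algebra_simps)
qed

lemma PV_bd: "j \<in> {1..T} \<Longrightarrow> f (PV j) \<le> 2 * b \<and> f (PV j) \<ge> b"
proof -
  assume j: "j \<in> {1..T}"
  have p: "f (PV j) > 0" using pos mem_P(2)[OF j] by auto
  have "lam * f (PV j) \<le> f (PV j) / 2" using lam_half p by (simp add: mult_right_mono)
  moreover have "lam * f (PV j) \<ge> 0" using lam_pos p by simp
  ultimately show ?thesis using PV_eq[OF j] by simp
qed

lemma PU_bd: "j \<in> {1..T} \<Longrightarrow> j \<noteq> 1 \<Longrightarrow> f (PU j) \<le> 2 * a"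
proof -
  assume j: "j \<in> {1..T}" "j \<noteq> 1"
  have p: "f (PU j) > 0" using pos mem_P(1)[OF j(1)] j(2) by auto
  have "lam * f (PU j) \<le> f (PU j) / 2" using lam_half p by (simp add: mult_right_mono)
  then show ?thesis using PU_eq[OF j] by simp
qed

lemma all_6a: "x \<in> V - {PU 1} \<Longrightarrow> f x \<le> 6 * a"
proof -
  assume x: "x \<in> V - {PU 1}"
  have a0: "a > 0" by (rule fa)
  show ?thesis
  proof (cases x)
    case HU then show ?thesis using a0 by simp
  next
    case HV then show ?thesis using b_2a a0 by simp
  next
    case (HX i r)
    then have "i \<in> {1..l}" "r \<in> {1..k}" using x unfolding H_verts_def by auto
    then show ?thesis using HX fHX xs_2a[of i] a0 by simp
  next
    case (HY1 r)
    then have "r \<in> {1..k}" using x unfolding H_verts_def by auto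
    then show ?thesis using HY1 fHY1 y1_2a a0 by simp
  next
    case HY2 then show ?thesis using c_3a a0 by simp
  next
    case HY3 then show ?thesis using d_4a a0 by simp
  next
    case (HY4 r)
    then have "r \<in> {1..k}" using x unfolding H_verts_def by auto
    then show ?thesis using HY4 fHY4 y4_6a a0 by simp
  next
    case (PU j)
    then have "j \<in> {1..T}" "j \<noteq> 1" using x unfolding H_verts_def by auto
    then show ?thesis using PU PU_bd a0 by fastforce
  next
    case (PV j)
    then have "j \<in> {1..T}" using x unfolding H_verts_def by auto
    then show ?thesis using PV PV_bd b_2a a0 by fastforce
  qed
qed

lemma lam_lb: "6 * lam * real nV \<ge> 1"
proof -
  have "(\<Sum>x\<in>V-{PU 1}. f x) \<le> real nV * (6 * a)"
    using sum_bounded_above[of "V-{PU 1}" f "6 * a"] all_6a by simp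
  then have "lam * (\<Sum>x\<in>V-{PU 1}. f x) \<le> lam * (real nV * (6 * a))" using lam_pos by (intro mult_left_mono) auto
  then have "a \<le> (6 * lam * real nV) * a" using glob by (simp add: algebra_simps)
  then show ?thesis using fa by simp
qed

lemma ba_lam: "b - a \<le> lam * real k * b"
proof -
  have "lam * (6 * real nV * (real l + 1)) \<le> lam * (real k)^2" using kbig lam_pos by (intro mult_left_mono) auto
  moreover have "lam * (6 * real nV * (real l + 1)) = (6 * lam * real nV) * (real l + 1)" by simp
  moreover have "(6 * lam * real nV) * (real l + 1) \<ge> real l + 1" using lam_lb by simp
  ultimately have h: "real l + 1 \<le> lam * (real k)^2" by linarith
  have "(real l + 1) * a \<le> (lam * (real k)^2) * a" using h fa by (intro mult_right_mono) auto
  then have "real k * (b - a) \<le> (lam * (real k)^2) * a" using ba_bd by linarith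
  also have "\<dots> = real k * (lam * real k * a)" by (simp add: power2_eq_square)
  finally have "b - a \<le> lam * real k * a" using k1r by simp
  also have "\<dots> \<le> lam * real k * b" using a_le_b lam_pos k1r by (intro mult_left_mono) auto
  finally show ?thesis .
qed

lemma y4_ge_b: "b \<le> y4"
proof -
  have dsub: "d = (2 - lam) * y4 - b" using y4_eq by simp
  have E1: "y4 * ((1 - lam) * (real k + 2 - lam)) = (real k + 1 - lam) * b + c"
    using HY3_eq unfolding dsub by (simp add: algebra_simps)
  have "b * (lam^2 - 2 * lam) \<le> 0"
  proof -
    have "lam^2 - 2 * lam \<le> 0" using lam_pos lam_lt1 by (simp add: power2_eq_square)
    then show ?thesis using a_le_b fa by (simp add: mult_nonneg_nonpos)
  qed
  then have "c \<ge> b * (1 - 2 * lam - lam * real k + lam^2)"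
    using a_le_c ba_lam by (simp add: algebra_simps)
  then have "y4 * ((1 - lam) * (real k + 2 - lam)) \<ge> b * ((1 - lam) * (real k + 2 - lam))"
    using E1 by (simp add: algebra_simps power2_eq_square)
  moreover have "(1 - lam) * (real k + 2 - lam) > 0" using lam_lt1 k1r by simp
  ultimately show ?thesis by (meson mult_le_cancel_right_pos)
qed


end

context HF2 begin
lemma xl_lt_b: "xs l < b"
proof -
  have "(\<Sum>j\<in>{1..T}. (b - f (PV j))) \<le> 0" using PV_bd by (intro sum_nonpos) auto
  moreover have "real k * (b - y4) \<le> 0" using y4_ge_b by (simp add: mult_nonneg_nonpos)
  moreover have "lam * b > 0" using lam_pos fa a_le_b by simp
  ultimately have "real k * (b - xs l) > 0" using HV_eq by linarith
  then show ?thesis using k1r by (simp add: zero_less_mult_iff)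
qed

lemma phi_pos: "j \<le> l \<Longrightarrow> xs (Suc (l - j)) - xs (l - j) > 0"
proof (induction j)
  case 0 then show ?case using xl_lt_b xsl by simp
next
  case (Suc j)
  have i: "1 \<le> l - j" "l - j \<le> l" using Suc.prems by auto
  have e: "Suc (l - Suc j) = l - j" using Suc.prems by simp
  have "xs (Suc (l - j)) - xs (l - j) = (xs (l - j) - xs (l - j - 1)) - lam * xs (l - j)"
    using xs_step[OF i] by simp
  moreover have "lam * xs (l - j) > 0" using lam_pos xs_pos[of "l - j"] by simp
  moreover have "xs (Suc (l - j)) - xs (l - j) > 0" using Suc.IH Suc.prems by simp
  ultimately have g: "xs (l - j) - xs (l - j - 1) > 0" by linarith
  have m: "l - Suc j = l - j - 1" by simp
  have q1: "xs (Suc (l - Suc j)) = xs (l - j)" by (simp only: e)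
  have q2: "xs (l - Suc j) = xs (l - j - 1)" by (simp only: m)
  show ?case using g q1 q2 by linarith
qed

lemma phi_pos': assumes "i \<le> l" shows "xs i < xs (Suc i)"
proof -
  have e: "l - (l - i) = i" using assms by simp
  have "l - i \<le> l" by simp
  then have "xs (Suc (l - (l - i))) - xs (l - (l - i)) > 0" by (rule phi_pos)
  then show ?thesis unfolding e by simp
qed

lemma xs_mono: "i < j \<Longrightarrow> j \<le> l+1 \<Longrightarrow> xs i < xs j"
proof (induction j)
  case 0 then show ?case by simp
next
  case (Suc j)
  have jj: "xs j < xs (Suc j)" using phi_pos'[of j] Suc.prems by simp
  show ?case
  proof (cases "i = j")
    case True then show ?thesis using jj by simp
  next
    case False then have "i < j" using Suc.prems by simp
    then have "xs i < xs j" using Suc.IH Suc.prems by simp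
    then show ?thesis using jj by simp
  qed
qed

lemma tree_path:
  assumes st: "spectral_tree V E (PU 1) f p"
  shows "spectral_path_length (PU 1) p (PV 1) = l + 3"
proof -
  have stx: "\<And>x. x \<in> V - {PU 1} \<Longrightarrow> p x \<in> nbrs V E x \<and> (\<forall>y\<in>nbrs V E x. f (p x) \<le> f y)"
    using st unfolding spectral_tree_def by blast
  have K1: "1 \<in> {1..k}" using k1 by simp
  have T1': "1 \<in> {1..T}" using T1 by simp
  have s1: "p (PV 1) = HV" using stx[of "PV 1"] mem_P(2)[OF T1'] nbrs_PV[OF T1'] by auto
  obtain r0 where r0: "r0 \<in> {1..k}" "p HV = HX l r0"
  proof -
    have h: "p HV \<in> nbrs V E HV" "f (p HV) \<le> f (HX l 1)" using stx[of HV] mem_basic nbrs_HV K1 by auto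
    have "f (HX l 1) < b" using fHX[of l 1] l2 K1 xl_lt_b by simp
    then have lt: "f (p HV) < b" using h by simp
    have "p HV \<notin> HY4 ` {1..k}" using lt fHY4 y4_ge_b by auto
    moreover have "p HV \<notin> PV ` {1..T}" using lt PV_bd by force
    ultimately have "p HV \<in> HX l ` {1..k}" using h(1) nbrs_HV by auto
    then show ?thesis using that by auto
  qed
  have s3: "p (HX i r0) = HX (i-1) r0" if i: "2 \<le> i" "i \<le> l" for i
  proof -
    let ?R = "if i = l then HV else HX (i+1) r0"
    have i1: "i \<in> {1..l}" using i by simp
    have nb: "nbrs V E (HX i r0) = {HX (i-1) r0, ?R}" using nbrs_HX[OF i1 r0(1)] i by simp
    have h: "p (HX i r0) \<in> {HX (i-1) r0, ?R}" "f (p (HX i r0)) \<le> f (HX (i-1) r0)"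
      using stx[of "HX i r0"] mem_HX[OF i1 r0(1)] nb by auto
    have im: "i - 1 \<in> {1..l}" using i by auto
    have fl: "f (HX (i-1) r0) = xs (i-1)" using fHX[OF im r0(1)] .
    have fR: "f ?R = xs (i+1)" using fHX[of "i+1" r0] r0 i xsl by auto
    have "xs (i-1) < xs (i+1)" using xs_mono[of "i-1" "i+1"] i by simp
    then have "p (HX i r0) \<noteq> ?R" using h(2) fl fR by auto
    then show ?thesis using h(1) by auto
  qed
  have s4: "p (HX 1 r0) = HU"
  proof -
    have i1: "1 \<in> {1..l}" using l2 by simp
    have nb: "nbrs V E (HX 1 r0) = {HU, HX 2 r0}" using nbrs_HX[OF i1 r0(1)] l2 by (simp add: numeral_2_eq_2)
    have h: "p (HX 1 r0) \<in> {HU, HX 2 r0}" "f (p (HX 1 r0)) \<le> f HU"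
      using stx[of "HX 1 r0"] mem_HX[OF i1 r0(1)] nb by auto
    have "f (HX 2 r0) = xs 2" using fHX[of 2 r0] r0 l2 by simp
    moreover have "xs 0 < xs 2" using xs_mono[of 0 2] l2 by simp
    ultimately have "p (HX 1 r0) \<noteq> HX 2 r0" using h(2) xs0 by auto
    then show ?thesis using h(1) by auto
  qed
  have s5: "p HU = PU 1"
  proof -
    have h0: "p HU \<in> nbrs V E HU \<and> (\<forall>y\<in>nbrs V E HU. f (p HU) \<le> f y)"
      using stx[of HU] mem_basic by blast
    have "PU 1 \<in> nbrs V E HU" unfolding nbrs_HU using T1' by blast
    then have h: "p HU \<in> nbrs V E HU" "f (p HU) \<le> f (PU 1)" using h0 by blast+
    have "p HU \<in> V" using h(1) unfolding nbrs_def by auto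
    show ?thesis
    proof (rule ccontr)
      assume "p HU \<noteq> PU 1"
      then have "f (p HU) > 0" using pos \<open>p HU \<in> V\<close> by blast
      then show False using h(2) fs by simp
    qed
  qed
  have it: "(p ^^ (n+2)) (PV 1) = HX (l - n) r0" if "n \<le> l - 1" for n
    using that
  proof (induction n)
    case 0 then show ?case using s1 r0 by simp
  next
    case (Suc n)
    then have "(p ^^ (n+2)) (PV 1) = HX (l - n) r0" by simp
    then have "(p ^^ (Suc n + 2)) (PV 1) = p (HX (l - n) r0)" by simp
    also have "\<dots> = HX (l - n - 1) r0" using s3[of "l - n"] Suc.prems by simp
    finally show ?case by simp
  qed
  have e1: "l - (l - 1) = 1" "l - 1 + 2 = l + 1" using l2 by auto
  have itl: "(p ^^ (l+1)) (PV 1) = HX 1 r0" using it[of "l-1"] unfolding e1 by simp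
  have ithu: "(p ^^ (l+2)) (PV 1) = HU" using itl s4 by simp
  have itpu: "(p ^^ (l+3)) (PV 1) = PU 1" using ithu s5 by (simp add: numeral_3_eq_3)
  have notpu: "(p ^^ n) (PV 1) \<noteq> PU 1" if "n < l + 3" for n
  proof -
    have "n = 0 \<or> n = 1 \<or> (2 \<le> n \<and> n \<le> l+1) \<or> n = l+2" using that by presburger
    then consider "n = 0" | "n = 1" | "2 \<le> n \<and> n \<le> l+1" | "n = l+2" by blast
    then show ?thesis
    proof cases
      case 1 then show ?thesis by simp
    next
      case 2 then show ?thesis using s1 by simp
    next
      case 3
      then have e: "n - 2 + 2 = n" by presburger
      have "n - 2 \<le> l - 1" using 3 by presburger
      then have "(p ^^ n) (PV 1) = HX (l - (n-2)) r0" using it[of "n-2"] unfolding e by simp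
      then show ?thesis by simp
    next
      case 4 then show ?thesis using ithu by simp
    qed
  qed
  show ?thesis unfolding spectral_path_length_def
  proof (rule Least_equality)
    show "(p ^^ (l+3)) (PV 1) = PU 1" by (rule itpu)
    fix m assume "(p ^^ m) (PV 1) = PU 1"
    then show "l + 3 \<le> m" using notpu by (meson not_le)
  qed
qed

end

definition lev :: "hvert \<Rightarrow> nat" where
  "lev x = (case x of HU \<Rightarrow> 1 | HV \<Rightarrow> 6 | HX i r \<Rightarrow> min (i+1) 6 | HY1 r \<Rightarrow> 2 | HY2 \<Rightarrow> 3
     | HY3 \<Rightarrow> 4 | HY4 r \<Rightarrow> 5 | PU j \<Rightarrow> 0 | PV j \<Rightarrow> 7)"

lemma walk_lev:
  assumes w: "is_walk Vs E ws" and adj: "\<And>x y. E x y \<Longrightarrow> lev x \<le> lev y + 1"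
  shows "i < length ws \<Longrightarrow> lev (ws ! 0) \<le> lev (ws ! i) + i"
proof (induction i)
  case 0 then show ?case by simp
next
  case (Suc i)
  have "E (ws ! i) (ws ! Suc i)" using w Suc.prems unfolding is_walk_def by auto
  then have "lev (ws ! i) \<le> lev (ws ! Suc i) + 1" by (rule adj)
  then show ?case using Suc by simp
qed

context HG begin

lemma lev_adj: assumes "l \<ge> 5" shows "E x y \<Longrightarrow> lev x \<le> lev y + 1"
  unfolding H_adj_def H_edge0_def lev_def using assms by (auto split: hvert.splits)

lemma gdist7: assumes "l \<ge> 5" shows "gdist V E (PV 1) (PU 1) = 7"
proof -
  let ?w = "[PV 1, HV, HY4 1, HY3, HY2, HY1 1, HU, PU 1]"
  have w: "is_walk V E ?w"
    unfolding is_walk_def using k1 T1 l2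
    by (simp add: All_less_Suc numeral_eq_Suc H_adj_def H_edge0_def H_verts_def)
  show ?thesis unfolding gdist_def
  proof (rule Least_equality)
    show "\<exists>ws. is_walk V E ws \<and> hd ws = PV 1 \<and> last ws = PU 1 \<and> length ws = 7 + 1"
      using w by (intro exI[of _ ?w]) simp
    fix n assume "\<exists>ws. is_walk V E ws \<and> hd ws = PV 1 \<and> last ws = PU 1 \<and> length ws = n + 1"
    then obtain ws where ws: "is_walk V E ws" "hd ws = PV 1" "last ws = PU 1" "length ws = n + 1" by blast
    have "lev (ws ! 0) \<le> lev (ws ! n) + n"
      using walk_lev[OF ws(1) lev_adj[OF assms], of n] ws(4) by simp
    moreover have "ws ! 0 = PV 1" using ws(2,4) by (cases ws) auto
    moreover have "ws ! n = PU 1" proof -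
      have "ws \<noteq> []" using ws(4) by auto
      then show ?thesis using ws(3,4) last_conv_nth[of ws] by simp
    qed
    ultimately show "7 \<le> n" by (simp add: lev_def)
  qed
qed

lemma card_V: "card V \<le> 4 + l * k + k + k + T + T"
proof -
  have X: "{HX i r | i r. i \<in> {1..l} \<and> r \<in> {1..k}} = (\<lambda>(i,r). HX i r) ` ({1..l} \<times> {1..k})" by auto
  have cX: "card {HX i r | i r. i \<in> {1..l} \<and> r \<in> {1..k}} \<le> l * k"
    unfolding X using card_image_le[of "{1..l} \<times> {1..k}" "\<lambda>(i,r). HX i r"] by simp
  have c4: "card {HU, HV, HY2, HY3} \<le> 4" by simp
  have f1: "finite {HU, HV, HY2, HY3}" "finite {HX i r | i r. i \<in> {1..l} \<and> r \<in> {1..k}}"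
    "finite (HY1 ` {1..k})" "finite (HY4 ` {1..k})" "finite (PU ` {1..T})" "finite (PV ` {1..T})"
    using X by auto
  have "card V \<le> card {HU, HV, HY2, HY3} + card {HX i r | i r. i \<in> {1..l} \<and> r \<in> {1..k}}
     + card (HY1 ` {1..k}) + card (HY4 ` {1..k}) + card (PU ` {1..T}) + card (PV ` {1..T})"
    unfolding H_verts_def
    by (rule order_trans[OF card_Un_le] add_mono order_refl | simp add: f1)+
  moreover have "card (HY1 ` {1..k}) \<le> k" "card (HY4 ` {1..k}) \<le> k" "card (PU ` {1..T}) \<le> T" "card (PV ` {1..T}) \<le> T"
    using card_image_le[of "{1..k}"] card_image_le[of "{1..T}"] by (metis card_atLeastAtMost diff_Suc_1 finite_atLeastAtMost)+
  ultimately show ?thesis using cX c4 by linarith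
qed

end

theorem theorem19:
  fixes l :: nat and t :: real
  assumes "l > 6" and "t > 0"
  shows "\<exists>K::nat. \<forall>k \<ge> K. k > 2 \<longrightarrow>
    (let T = nat \<lfloor>t * real k\<rfloor>; Vs = H_verts l k T; E = H_adj l k T in
      (\<forall>f p. spectral_vector Vs E (PU 1) f \<longrightarrow> spectral_tree Vs E (PU 1) f p \<longrightarrow>
              spectral_path_length (PU 1) p (PV 1) = l + 3)
      \<and> gdist Vs E (PV 1) (PU 1) = 7)"
proof -
  define C where "C = 6 * (real l + 1) * (real l + 6 + 2*t)"
  define K :: nat where "K = nat \<lceil>C + 1/t\<rceil> + (l+1)^2 + 3"
  show ?thesis
  proof (intro exI[of _ K] allI impI)
    fix k :: nat assume kK: "k \<ge> K" "k > 2"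
    define T where "T = nat \<lfloor>t * real k\<rfloor>"
    have "real K \<ge> C + 1/t" unfolding K_def by linarith
    then have kr: "real k \<ge> C + 1/t" using kK(1) by (meson of_nat_le_iff order_trans)
    have C0: "C \<ge> 0" unfolding C_def using assms by simp
    have "real ((l+1)^2) \<le> real k" using kK(1) unfolding K_def by linarith
    then have kr2: "(real l + 1)^2 \<le> real k" by (simp add: add.commute)
    have "t * real k \<ge> t * (1/t)" using kr C0 assms(2) by (intro mult_left_mono) auto
    then have tk1: "t * real k \<ge> 1" using assms(2) by simp
    then have T1: "T \<ge> 1" unfolding T_def by linarith
    have Tle: "real T \<le> t * real k" unfolding T_def using tk1 by linarith
    have k1: "k \<ge> 1" using kK(2) by simp
    interpret HG l k T using assms(1) k1 T1 by unfold_locales auto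
    have g7: "gdist (H_verts l k T) (H_adj l k T) (PV 1) (PU 1) = 7" using gdist7 assms(1) by simp
    have sp: "spectral_path_length (PU 1) p (PV 1) = l + 3"
      if sv: "spectral_vector (H_verts l k T) (H_adj l k T) (PU 1) f"
      and st: "spectral_tree (H_verts l k T) (H_adj l k T) (PU 1) f p" for f p
    proof -
      obtain lam where eig: "Ls_eig (H_verts l k T) (H_adj l k T) (PU 1) f lam"
        using sv unfolding spectral_vector_def by blast
      have pos: "\<forall>x\<in>H_verts l k T - {PU 1}. f x > 0" and fs: "f (PU 1) = 0"
        using sv unfolding spectral_vector_def by auto
      interpret HF l k T f lam using eig pos fs by unfold_locales
      have "nV \<le> card V" using finite_V by (simp add: card_Diff1_le)
      then have "real nV \<le> 4 + real l * real k + real k + real k + real T + real T"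
        using card_V by (metis (mono_tags, lifting) le_trans of_nat_add of_nat_le_iff of_nat_mult of_nat_numeral)
      also have "\<dots> \<le> (real l + 6 + 2*t) * real k" using Tle k1 by (simp add: algebra_simps)
      finally have nb: "real nV \<le> (real l + 6 + 2*t) * real k" .
      have "6 * real nV * (real l + 1) \<le> 6 * ((real l + 6 + 2*t) * real k) * (real l + 1)"
        using nb by simp
      also have "\<dots> = C * real k" unfolding C_def by (simp add: algebra_simps)
      also have "\<dots> \<le> real k * real k"
      proof -
        have "C \<le> real k" using kr assms(2) by (smt (verit) divide_pos_pos)
        then show ?thesis by (simp add: mult_right_mono)
      qed
      finally have kbig: "6 * real nV * (real l + 1) \<le> (real k)^2" by (simp add: power2_eq_square)
      interpret HF2 l k T f lam using kr2 kbig by unfold_locales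
      show ?thesis using tree_path st by simp
    qed
    show "let T = nat \<lfloor>t * real k\<rfloor>; Vs = H_verts l k T; E = H_adj l k T in
      (\<forall>f p. spectral_vector Vs E (PU 1) f \<longrightarrow> spectral_tree Vs E (PU 1) f p \<longrightarrow>
              spectral_path_length (PU 1) p (PV 1) = l + 3)
      \<and> gdist Vs E (PV 1) (PU 1) = 7"
      unfolding Let_def T_def[symmetric] using sp g7 by blast
  qed
qed

end
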